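(* Let $G$ be an infinite, connected, vertex-transitive, smallish graph in which every vertex has degree $k$, with a unit resistor on each edge. For every vertex $v$ of $G$ and every positive integer $r$, $$\sum_{j = v_r \sim v_{r-1} \sim \cdots \sim v_0 = v} R_{vj} \;=\; 2k^{r-1}\sum_{s=0}^{r-1}\frac{\Delta_s}{k^s},$$ where the sum on the left runs over all walks $v=v_0\sim v_1\sim\cdots\sim v_r=j$ of length $r$ starting at $v$ (vertices may repeat), and $j$ denotes the endpoint of the walk.
   Context: $x\sim y$ means $x$ and $y$ are adjacent. $R_{xy}$ denotes the effective electrical resistance between vertices $x,y$ when every edge carries unit resistance. $G$ is vertex transitive if for any two vertices there is a graph automorphism mapping one to the other. $G$ is smallish if it has bounded degree and possesses a sequence of finite subgraphs $G_m$ with $G_m\subseteq G_{m+1}$, $\bigcup_m G_m=G$, and $|\mathrm{boundary}(G_m)|/|G_m|\to 0$ as $m\to\infty$ (here $|G_m|$ is the number of vertices of $G_m$ and the boundary consists of the vertices of $G_m$ adjacent to vertices outside $G_m$). $\Delta_s$ denotes the number of walks of length $s$ (all walks, including those repeating vertices) that start and end at a given vertex (independent of the vertex by transitivity), with $\Delta_0=1$. *)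

theory Defs
  imports "HOL-Analysis.Analysis"
begin

text \<open>Simple graphs on the whole type 'a, given by a symmetric irreflexive
adjacency relation E.\<close>

definition simple_graph :: "('a \<Rightarrow> 'a \<Rightarrow> bool) \<Rightarrow> bool" where
  "simple_graph E \<longleftrightarrow> (\<forall>u v. E u v \<longrightarrow> E v u) \<and> (\<forall>u. \<not> E u u)"

definition regular_graph :: "('a \<Rightarrow> 'a \<Rightarrow> bool) \<Rightarrow> nat \<Rightarrow> bool" where
  "regular_graph E k \<longleftrightarrow> (\<forall>v. finite {u. E v u} \<and> card {u. E v u} = k)"

definition connected_graph :: "('a \<Rightarrow> 'a \<Rightarrow> bool) \<Rightarrow> bool" where
  "connected_graph E \<longleftrightarrow> (\<forall>v w. E\<^sup>*\<^sup>* v w)"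

definition graph_automorphism :: "('a \<Rightarrow> 'a \<Rightarrow> bool) \<Rightarrow> ('a \<Rightarrow> 'a) \<Rightarrow> bool" where
  "graph_automorphism E \<sigma> \<longleftrightarrow> bij \<sigma> \<and> (\<forall>u v. E u v \<longleftrightarrow> E (\<sigma> u) (\<sigma> v))"

definition vertex_transitive :: "('a \<Rightarrow> 'a \<Rightarrow> bool) \<Rightarrow> bool" where
  "vertex_transitive E \<longleftrightarrow> (\<forall>x y. \<exists>\<sigma>. graph_automorphism E \<sigma> \<and> \<sigma> x = y)"

definition boundary :: "('a \<Rightarrow> 'a \<Rightarrow> bool) \<Rightarrow> 'a set \<Rightarrow> 'a set" where
  "boundary E S = {x \<in> S. \<exists>y. y \<notin> S \<and> E x y}"

definition smallish :: "('a \<Rightarrow> 'a \<Rightarrow> bool) \<Rightarrow> bool" where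
  "smallish E \<longleftrightarrow>
     (\<exists>D. \<forall>v. finite {u. E v u} \<and> card {u. E v u} \<le> D) \<and>
     (\<exists>G :: nat \<Rightarrow> 'a set.
        (\<forall>m. finite (G m) \<and> G m \<noteq> {}) \<and> (\<forall>m. G m \<subseteq> G (Suc m)) \<and>
        (\<Union>m. G m) = UNIV \<and>
        (\<lambda>m. real (card (boundary E (G m))) / real (card (G m))) \<longlonglongrightarrow> 0)"

text \<open>Dirichlet energy of f (unit resistance on each edge; each undirected
edge counted once, hence the factor 1/2 over ordered pairs).\<close>
definition finite_energy :: "('a \<Rightarrow> 'a \<Rightarrow> bool) \<Rightarrow> ('a \<Rightarrow> real) \<Rightarrow> bool" where
  "finite_energy E f \<longleftrightarrow> (\<lambda>(u,v). (f u - f v)^2) summable_on {(u,v). E u v}"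

definition energy :: "('a \<Rightarrow> 'a \<Rightarrow> bool) \<Rightarrow> ('a \<Rightarrow> real) \<Rightarrow> real" where
  "energy E f = (1/2) * infsum (\<lambda>(u,v). (f u - f v)^2) {(u,v). E u v}"

text \<open>Effective resistance (free effective resistance, Dirichlet principle):
  R_xy = sup { (f x - f y)^2 : f of finite energy with energy at most 1 }.
  It coincides with the limit of effective resistances in any exhaustion by
  finite subgraphs.\<close>
definition eff_res :: "('a \<Rightarrow> 'a \<Rightarrow> bool) \<Rightarrow> 'a \<Rightarrow> 'a \<Rightarrow> real" where
  "eff_res E x y = Sup {(f x - f y)^2 | f. finite_energy E f \<and> energy E f \<le> 1}"

definition walks :: "('a \<Rightarrow> 'a \<Rightarrow> bool) \<Rightarrow> 'a \<Rightarrow> nat \<Rightarrow> 'a list set" where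
  "walks E v r = {ws. length ws = Suc r \<and> ws ! 0 = v \<and> (\<forall>i<r. E (ws ! i) (ws ! Suc i))}"

text \<open>Number of closed walks of length s at v (Delta_s).\<close>
definition closed_walks_count :: "('a \<Rightarrow> 'a \<Rightarrow> bool) \<Rightarrow> 'a \<Rightarrow> nat \<Rightarrow> nat" where
  "closed_walks_count E v s = card {ws \<in> walks E v s. last ws = v}"

end

theory Submission
  imports Defs
begin


definition Dg :: "('a \<Rightarrow> 'a \<Rightarrow> bool) \<Rightarrow> ('a \<times> 'a) set" where
  "Dg E = {p. E (fst p) (snd p)}"

definition dd :: "('a \<Rightarrow> real) \<Rightarrow> 'a \<times> 'a \<Rightarrow> real" where
  "dd f p = f (fst p) - f (snd p)"

definition ip :: "('a \<Rightarrow> 'a \<Rightarrow> bool) \<Rightarrow> ('a \<Rightarrow> real) \<Rightarrow> ('a \<Rightarrow> real) \<Rightarrow> real" where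
  "ip E f g = (1/2) * infsum (\<lambda>p. dd f p * dd g p) (Dg E)"

lemma Dg_eq: "{(u,v). E u v} = Dg E" by (auto simp: Dg_def)

lemma fe_iff: "finite_energy E f \<longleftrightarrow> (\<lambda>p. (dd f p)^2) summable_on Dg E"
  unfolding finite_energy_def Dg_eq by (simp add: case_prod_unfold dd_def)

lemma energy_ip: "energy E f = ip E f f"
  unfolding energy_def ip_def Dg_eq by (simp add: case_prod_unfold dd_def power2_eq_square)

lemma abs_prod_le: "\<bar>(a::real) * b\<bar> \<le> a^2 + b^2"
proof -
  have "0 \<le> (\<bar>a\<bar> - \<bar>b\<bar>)^2" by simp
  also have "(\<bar>a\<bar> - \<bar>b\<bar>)^2 = a^2 + b^2 - 2 * \<bar>a * b\<bar>"
    by (simp add: power2_diff abs_mult)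
  finally have h: "2 * \<bar>a * b\<bar> \<le> a^2 + b^2" by simp
  have "0 \<le> \<bar>a * b\<bar>" by simp
  with h show ?thesis by linarith
qed

lemma real_summable_by_abs:
  fixes h g :: "'b \<Rightarrow> real"
  assumes "g summable_on A" "\<And>x. x \<in> A \<Longrightarrow> \<bar>h x\<bar> \<le> g x"
  shows "h summable_on A"
proof -
  have "(\<lambda>x. norm (h x)) summable_on A"
    apply (rule summable_on_comparison_test[OF assms(1)])
    using assms(2) by auto
  then show ?thesis using summable_on_iff_abs_summable_on_real by blast
qed

lemma fe_prod:
  assumes "finite_energy E f" "finite_energy E g"
  shows "(\<lambda>p. dd f p * dd g p) summable_on Dg E"
proof (rule real_summable_by_abs)
  show "(\<lambda>p. (dd f p)^2 + (dd g p)^2) summable_on Dg E"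
    using assms unfolding fe_iff by (rule summable_on_add)
qed (rule abs_prod_le)

lemma dd_add[simp]: "dd (\<lambda>x. f x + g x) p = dd f p + dd g p" by (simp add: dd_def)
lemma dd_diff[simp]: "dd (\<lambda>x. f x - g x) p = dd f p - dd g p" by (simp add: dd_def)
lemma dd_scale[simp]: "dd (\<lambda>x. c * f x) p = c * dd f p" by (simp add: dd_def algebra_simps)
lemma dd_uminus[simp]: "dd (\<lambda>x. - f x) p = - dd f p" by (simp add: dd_def)
lemma dd_const[simp]: "dd (\<lambda>x. c) p = 0" by (simp add: dd_def)
lemma dd_add_const[simp]: "dd (\<lambda>x. f x + c) p = dd f p" by (simp add: dd_def)

lemma sq_add_le: "((a::real) + b)^2 \<le> 2 * a^2 + 2 * b^2"
proof -
  have "0 \<le> (a - b)^2" by simp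
  then show ?thesis by (simp add: power2_eq_square algebra_simps)
qed

lemma fe_add:
  assumes "finite_energy E f" "finite_energy E g"
  shows "finite_energy E (\<lambda>x. f x + g x)"
  unfolding fe_iff dd_add
proof (rule summable_on_comparison_test)
  show "(\<lambda>p. 2 * (dd f p)^2 + 2 * (dd g p)^2) summable_on Dg E"
    using assms unfolding fe_iff by (intro summable_on_add summable_on_cmult_right)
qed (auto intro: sq_add_le)

lemma fe_scale:
  assumes "finite_energy E f"
  shows "finite_energy E (\<lambda>x. c * f x)"
  using summable_on_cmult_right[of "\<lambda>p. (dd f p)^2" "Dg E" "c^2"] assms
  unfolding fe_iff dd_scale by (simp add: power_mult_distrib)

lemma fe_uminus:
  assumes "finite_energy E f"
  shows "finite_energy E (\<lambda>x. - f x)"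
  using assms unfolding fe_iff by simp

lemma fe_diff:
  assumes "finite_energy E f" "finite_energy E g"
  shows "finite_energy E (\<lambda>x. f x - g x)"
  using fe_add[OF assms(1) fe_uminus[OF assms(2)]] by simp

lemma fe_const: "finite_energy E (\<lambda>x. c)"
  unfolding fe_iff by simp

lemma fe_add_const: "finite_energy E f \<Longrightarrow> finite_energy E (\<lambda>x. f x + c)"
  unfolding fe_iff by simp

lemma ip_sym: "ip E f g = ip E g f"
  unfolding ip_def by (simp add: mult.commute)

lemma ip_add_left:
  assumes "finite_energy E f" "finite_energy E g" "finite_energy E h"
  shows "ip E (\<lambda>x. f x + g x) h = ip E f h + ip E g h"
proof -
  have "infsum (\<lambda>p. dd (\<lambda>x. f x + g x) p * dd h p) (Dg E)
      = infsum (\<lambda>p. dd f p * dd h p + dd g p * dd h p) (Dg E)"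
    by (simp add: algebra_simps)
  also have "\<dots> = infsum (\<lambda>p. dd f p * dd h p) (Dg E) + infsum (\<lambda>p. dd g p * dd h p) (Dg E)"
    by (rule infsum_add) (use fe_prod assms in auto)
  finally show ?thesis unfolding ip_def by (simp add: algebra_simps)
qed

lemma ip_scale_left:
  "ip E (\<lambda>x. c * f x) h = c * ip E f h"
proof -
  have "infsum (\<lambda>p. dd (\<lambda>x. c * f x) p * dd h p) (Dg E) = infsum (\<lambda>p. c * (dd f p * dd h p)) (Dg E)"
    by (simp add: algebra_simps)
  also have "\<dots> = c * infsum (\<lambda>p. dd f p * dd h p) (Dg E)"
    by (rule infsum_cmult_right')
  finally show ?thesis unfolding ip_def by simp
qed

lemma ip_uminus_left: "ip E (\<lambda>x. - f x) h = - ip E f h"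
  using ip_scale_left[of E "-1" f h] by simp

lemma ip_diff_left:
  assumes "finite_energy E f" "finite_energy E g" "finite_energy E h"
  shows "ip E (\<lambda>x. f x - g x) h = ip E f h - ip E g h"
  using ip_add_left[OF assms(1) fe_uminus[OF assms(2)] assms(3)] ip_uminus_left[of E g h] by simp

lemma ip_cong: "(\<And>p. p \<in> Dg E \<Longrightarrow> dd f p = dd f' p) \<Longrightarrow> ip E f g = ip E f' g"
  unfolding ip_def by (metis (no_types, lifting) infsum_cong)

lemma ip_add_const_left: "ip E (\<lambda>x. f x + c) g = ip E f g"
  by (rule ip_cong) simp

lemma ip_const_left: "ip E (\<lambda>x. c) g = 0"
  unfolding ip_def by simp

lemma ip_nonneg: "0 \<le> ip E f f"
  unfolding ip_def by (auto intro!: infsum_nonneg)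

lemma quad_nonneg_imp: 
  fixes a b c :: real
  assumes "\<And>t. 0 \<le> a - 2 * t * b + t^2 * c" "0 \<le> c"
  shows "b^2 \<le> a * c"
proof (cases "c = 0")
  case True
  have "b = 0"
  proof (rule ccontr)
    assume "b \<noteq> 0"
    have "0 \<le> a - 2 * ((a + 1) / (2 * b)) * b" using assms(1)[of "(a+1)/(2*b)"] True by simp
    also have "\<dots> = -1" using \<open>b \<noteq> 0\<close> by (simp add: field_simps)
    finally show False by simp
  qed
  then show ?thesis using True by simp
next
  case False
  hence c: "c > 0" using assms(2) by simp
  have "0 \<le> a - 2 * (b / c) * b + (b/c)^2 * c" by (rule assms(1))
  also have "\<dots> = (a * c - b^2) / c" using c by (simp add: field_simps power2_eq_square)
  finally show ?thesis using c by (simp add: divide_nonneg_pos zero_le_divide_iff)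
qed

lemma cauchy_schwarz:
  assumes "finite_energy E f" "finite_energy E g"
  shows "(ip E f g)^2 \<le> ip E f f * ip E g g"
proof (rule quad_nonneg_imp)
  fix t :: real
  have fg: "finite_energy E (\<lambda>x. t * g x)" by (rule fe_scale[OF assms(2)])
  have d: "finite_energy E (\<lambda>x. f x - t * g x)" by (rule fe_diff[OF assms(1) fg])
  have "0 \<le> ip E (\<lambda>x. f x - t * g x) (\<lambda>x. f x - t * g x)" by (rule ip_nonneg)
  also have "\<dots> = ip E f (\<lambda>x. f x - t * g x) - t * ip E g (\<lambda>x. f x - t * g x)"
    using ip_diff_left[OF assms(1) fg d] ip_scale_left by simp
  also have "ip E f (\<lambda>x. f x - t * g x) = ip E f f - t * ip E f g"
    using ip_diff_left[OF assms(1) fg assms(1)] ip_scale_left ip_sym by metis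
  also have "ip E g (\<lambda>x. f x - t * g x) = ip E f g - t * ip E g g"
    using ip_diff_left[OF assms(1) fg assms(2)] ip_scale_left ip_sym by metis
  finally show "0 \<le> ip E f f - 2 * t * ip E f g + t^2 * ip E g g"
    by (simp add: algebra_simps power2_eq_square)
qed (rule ip_nonneg)


lemma infsum_finite_support:
  fixes h :: "'b \<Rightarrow> real"
  assumes "finite S" "S \<subseteq> A" "\<And>x. x \<in> A - S \<Longrightarrow> h x = 0"
  shows "infsum h A = sum h S" "h summable_on A"
proof -
  have "infsum h A = infsum h S"
    by (rule infsum_cong_neutral) (use assms in auto)
  then show "infsum h A = sum h S" using assms(1) by simp
  have "h summable_on S" using assms(1) by simp
  moreover have "h summable_on A \<longleftrightarrow> h summable_on S"
    by (rule summable_on_cong_neutral) (use assms in auto)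
  ultimately show "h summable_on A" by simp
qed

lemma simple_sym: "simple_graph E \<Longrightarrow> E u v \<Longrightarrow> E v u"
  unfolding simple_graph_def by blast
lemma simple_irrefl: "simple_graph E \<Longrightarrow> \<not> E u u"
  unfolding simple_graph_def by blast

lemma edge_bound:
  assumes sg: "simple_graph E" and fe: "finite_energy E f" and e: "E x y"
  shows "(f x - f y)^2 \<le> ip E f f"
proof -
  have xy: "x \<noteq> y" using e simple_irrefl[OF sg] by blast
  have S: "{(x,y),(y,x)} \<subseteq> Dg E" using e simple_sym[OF sg e] by (auto simp: Dg_def)
  have "sum (\<lambda>p. (dd f p)^2) {(x,y),(y,x)} \<le> infsum (\<lambda>p. (dd f p)^2) (Dg E)"
    by (rule finite_sum_le_infsum) (use fe S in \<open>auto simp: fe_iff\<close>)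
  moreover have "sum (\<lambda>p. (dd f p)^2) {(x,y),(y,x)} = 2 * (f x - f y)^2"
    using xy by (simp add: dd_def power2_commute)
  ultimately show ?thesis unfolding ip_def by (simp add: power2_eq_square)
qed

lemma path_bound:
  assumes sg: "simple_graph E" and p: "E\<^sup>*\<^sup>* a b"
  shows "\<exists>C. \<forall>f. finite_energy E f \<longrightarrow> (f a - f b)^2 \<le> C * ip E f f"
  using p
proof (induction rule: rtranclp_induct)
  case base
  then show ?case by (auto intro!: exI[of _ 0])
next
  case (step c b)
  then obtain C where C: "\<And>f. finite_energy E f \<Longrightarrow> (f a - f c)^2 \<le> C * ip E f f" by blast
  show ?case
  proof (intro exI allI impI)
    fix f assume fe: "finite_energy E f"
    have "(f a - f b)^2 = ((f a - f c) + (f c - f b))^2" by simp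
    also have "\<dots> \<le> 2 * (f a - f c)^2 + 2 * (f c - f b)^2" by (rule sq_add_le)
    also have "\<dots> \<le> 2 * (C * ip E f f) + 2 * ip E f f"
      using C[OF fe] edge_bound[OF sg fe step(2)] by linarith
    finally show "(f a - f b)^2 \<le> (2 * C + 2) * ip E f f" by (simp add: algebra_simps)
  qed
qed

lemma zero_energy_const:
  assumes sg: "simple_graph E" and fe: "finite_energy E f" and z: "ip E f f = 0"
    and p: "E\<^sup>*\<^sup>* a b"
  shows "f a = f b"
  using p
proof (induction rule: rtranclp_induct)
  case base then show ?case by simp
next
  case (step c b)
  have "(f c - f b)^2 \<le> 0" using edge_bound[OF sg fe step(2)] z by simp
  then show ?case using step(3) by simp
qed

definition ind :: "'a \<Rightarrow> 'a \<Rightarrow> real" where "ind x = (\<lambda>y. if y = x then 1 else 0)"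

definition nbr :: "('a \<Rightarrow> 'a \<Rightarrow> bool) \<Rightarrow> 'a \<Rightarrow> 'a set" where "nbr E x = {u. E x u}"

lemma ind_support:
  assumes sg: "simple_graph E" and fin: "finite (nbr E x)"
  shows "finite ((\<lambda>j. (x,j)) ` nbr E x \<union> (\<lambda>j. (j,x)) ` nbr E x)"
    "(\<lambda>j. (x,j)) ` nbr E x \<union> (\<lambda>j. (j,x)) ` nbr E x \<subseteq> Dg E"
    "\<And>p. p \<in> Dg E - ((\<lambda>j. (x,j)) ` nbr E x \<union> (\<lambda>j. (j,x)) ` nbr E x) \<Longrightarrow> dd (ind x) p = 0"
proof -
  show "finite ((\<lambda>j. (x,j)) ` nbr E x \<union> (\<lambda>j. (j,x)) ` nbr E x)" using fin by simp
  show "(\<lambda>j. (x,j)) ` nbr E x \<union> (\<lambda>j. (j,x)) ` nbr E x \<subseteq> Dg E"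
    using simple_sym[OF sg] by (auto simp: Dg_def nbr_def)
  fix p assume p: "p \<in> Dg E - ((\<lambda>j. (x,j)) ` nbr E x \<union> (\<lambda>j. (j,x)) ` nbr E x)"
  obtain u v where uv: "p = (u,v)" by (cases p)
  have "E u v" using p uv by (auto simp: Dg_def)
  then have "u \<noteq> x" "v \<noteq> x" using p uv simple_sym[OF sg] by (auto simp: nbr_def)
  then show "dd (ind x) p = 0" using uv by (simp add: dd_def ind_def)
qed

lemma fe_ind:
  assumes sg: "simple_graph E" and fin: "finite (nbr E x)"
  shows "finite_energy E (ind x)"
  unfolding fe_iff
  by (rule infsum_finite_support(2)[OF ind_support(1,2)[OF sg fin]]) (use ind_support(3)[OF sg fin] in auto)

lemma ip_ind:
  assumes sg: "simple_graph E" and fin: "finite (nbr E x)"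
  shows "ip E f (ind x) = (\<Sum>j\<in>nbr E x. f x - f j)"
proof -
  let ?A = "(\<lambda>j. (x,j)) ` nbr E x" and ?B = "(\<lambda>j. (j,x)) ` nbr E x"
  have xn: "x \<notin> nbr E x" using simple_irrefl[OF sg] by (auto simp: nbr_def)
  have "infsum (\<lambda>p. dd f p * dd (ind x) p) (Dg E) = sum (\<lambda>p. dd f p * dd (ind x) p) (?A \<union> ?B)"
    by (rule infsum_finite_support(1)[OF ind_support(1,2)[OF sg fin]]) (use ind_support(3)[OF sg fin] in auto)
  also have "\<dots> = sum (\<lambda>p. dd f p * dd (ind x) p) ?A + sum (\<lambda>p. dd f p * dd (ind x) p) ?B"
    by (rule sum.union_disjoint) (use fin xn in auto)
  also have "sum (\<lambda>p. dd f p * dd (ind x) p) ?A = (\<Sum>j\<in>nbr E x. f x - f j)"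
    by (subst sum.reindex) (use xn in \<open>auto simp: inj_on_def dd_def ind_def intro!: sum.cong\<close>)
  also have "sum (\<lambda>p. dd f p * dd (ind x) p) ?B = (\<Sum>j\<in>nbr E x. f x - f j)"
    by (subst sum.reindex) (use xn in \<open>auto simp: inj_on_def dd_def ind_def intro!: sum.cong\<close>)
  finally show ?thesis unfolding ip_def by simp
qed


lemma ip_add_right:
  assumes "finite_energy E f" "finite_energy E g" "finite_energy E h"
  shows "ip E h (\<lambda>x. f x + g x) = ip E h f + ip E h g"
  using ip_add_left[OF assms] ip_sym by metis

lemma ip_scale_right: "ip E h (\<lambda>x. c * f x) = c * ip E h f"
  using ip_scale_left ip_sym by metis

lemma ip_expand:
  assumes f: "finite_energy E f" and h: "finite_energy E h"
  shows "ip E (\<lambda>x. f x + t * h x) (\<lambda>x. f x + t * h x) = ip E f f + 2 * t * ip E f h + t^2 * ip E h h"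
proof -
  have th: "finite_energy E (\<lambda>x. t * h x)" by (rule fe_scale[OF h])
  have s: "finite_energy E (\<lambda>x. f x + t * h x)" by (rule fe_add[OF f th])
  have "ip E (\<lambda>x. f x + t * h x) (\<lambda>x. f x + t * h x)
     = ip E f (\<lambda>x. f x + t * h x) + t * ip E h (\<lambda>x. f x + t * h x)"
    using ip_add_left[OF f th s] ip_scale_left by simp
  also have "ip E f (\<lambda>x. f x + t * h x) = ip E f f + t * ip E f h"
    using ip_add_right[OF f th f] ip_scale_right by simp
  also have "ip E h (\<lambda>x. f x + t * h x) = ip E h f + t * ip E h h"
    using ip_add_right[OF f th h] ip_scale_right by simp
  finally show ?thesis using ip_sym[of E h f] by (simp add: algebra_simps power2_eq_square)
qed

lemma ip_scale_both: "ip E (\<lambda>x. c * f x) (\<lambda>x. c * f x) = c^2 * ip E f f"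
  by (simp add: ip_scale_left[of E c f] ip_scale_right[of E f c f] power2_eq_square)

lemma parallelogram:
  assumes f: "finite_energy E f" and h: "finite_energy E h"
  shows "ip E (\<lambda>x. f x - h x) (\<lambda>x. f x - h x) + ip E (\<lambda>x. f x + h x) (\<lambda>x. f x + h x)
         = 2 * ip E f f + 2 * ip E h h"
proof -
  have e1: "(\<lambda>x. f x - h x) = (\<lambda>x. f x + (-1) * h x)" by simp
  have e2: "(\<lambda>x. f x + h x) = (\<lambda>x. f x + 1 * h x)" by simp
  show ?thesis unfolding e1 e2 ip_expand[OF f h] by simp
qed

lemma minkowski:
  assumes f: "finite_energy E f" and h: "finite_energy E h"
  shows "ip E (\<lambda>x. f x + h x) (\<lambda>x. f x + h x) \<le> (sqrt (ip E f f) + sqrt (ip E h h))^2"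
proof -
  have e2: "(\<lambda>x. f x + h x) = (\<lambda>x. f x + 1 * h x)" by simp
  have cs: "ip E f h \<le> sqrt (ip E f f) * sqrt (ip E h h)"
  proof -
    have "(ip E f h)^2 \<le> ip E f f * ip E h h" by (rule cauchy_schwarz[OF f h])
    hence "sqrt ((ip E f h)^2) \<le> sqrt (ip E f f * ip E h h)" by (rule real_sqrt_le_mono)
    hence "\<bar>ip E f h\<bar> \<le> sqrt (ip E f f * ip E h h)" by simp
    then show ?thesis by (simp add: real_sqrt_mult)
  qed
  have "ip E (\<lambda>x. f x + h x) (\<lambda>x. f x + h x) = ip E f f + 2 * ip E f h + ip E h h"
    unfolding e2 ip_expand[OF f h] by simp
  also have "\<dots> \<le> ip E f f + 2 * (sqrt (ip E f f) * sqrt (ip E h h)) + ip E h h" using cs by simp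
  also have "\<dots> = (sqrt (ip E f f) + sqrt (ip E h h))^2"
    using ip_nonneg[of E f] ip_nonneg[of E h] by (simp add: power2_eq_square algebra_simps)
  finally show ?thesis .
qed


lemma dd_diff_const[simp]: "dd (\<lambda>x. f x - c) p = dd f p" by (simp add: dd_def)

lemma ip_shift: "ip E (\<lambda>x. f x - c) (\<lambda>x. f x - c) = ip E f f"
proof -
  have "ip E (\<lambda>x. f x - c) (\<lambda>x. f x - c) = ip E f (\<lambda>x. f x - c)" by (rule ip_cong) simp
  also have "\<dots> = ip E (\<lambda>x. f x - c) f" by (rule ip_sym)
  also have "\<dots> = ip E f f" by (rule ip_cong) simp
  finally show ?thesis .
qed

lemma inv_Suc_le: "M \<le> n \<Longrightarrow> 1 / (real n + 1) \<le> 1 / (real M + 1)"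
  by (simp add: frac_le)

lemma cauchy_from_bound:
  fixes X :: "nat \<Rightarrow> real"
  assumes b: "\<And>n k. (X n - X k)^2 \<le> C * (1/(real n+1) + 1/(real k+1))"
  shows "convergent X"
  unfolding Cauchy_convergent_iff[symmetric]
proof (rule CauchyI)
  fix e :: real assume e: "0 < e"
  obtain M :: nat where M: "(2 * (\<bar>C\<bar> + 1)) / e^2 < real M" using reals_Archimedean2 by blast
  have M1: "(2 * (\<bar>C\<bar> + 1)) / e^2 < real M + 1" using M by simp
  have e2: "0 < e^2" using e by simp
  show "\<exists>M. \<forall>m\<ge>M. \<forall>n\<ge>M. norm (X m - X n) < e"
  proof (intro exI allI impI)
    fix m n assume mM: "M \<le> m" and nM: "M \<le> n"
    have "(X m - X n)^2 \<le> C * (1/(real m+1) + 1/(real n+1))" by (rule b)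
    also have "\<dots> \<le> \<bar>C\<bar> * (1/(real m+1) + 1/(real n+1))"
      by (rule mult_right_mono) (auto simp: add_pos_pos)
    also have "\<dots> \<le> \<bar>C\<bar> * (2 / (real M + 1))"
      using inv_Suc_le[OF mM] inv_Suc_le[OF nM] by (intro mult_left_mono) auto
    also have "\<dots> < (\<bar>C\<bar> + 1) * (2 / (real M + 1))"
      by (intro mult_strict_right_mono) auto
    also have "\<dots> < e^2"
    proof -
      have "2 * (\<bar>C\<bar> + 1) < e^2 * (real M + 1)" using M1 e2 by (simp add: field_simps)
      then show ?thesis by (simp add: field_simps)
    qed
    finally have "(X m - X n)^2 < e^2" .
    then have "\<bar>X m - X n\<bar> < e" using e by (metis abs_le_square_iff abs_of_pos less_le_not_le linorder_le_less_linear)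
    then show "norm (X m - X n) < e" by simp
  qed
qed

lemma inv_tendsto: "(\<lambda>n. c / (real n + 1)) \<longlonglongrightarrow> 0"
proof -
  have "(\<lambda>n. c * inverse (real (Suc n))) \<longlonglongrightarrow> c * 0"
    by (intro tendsto_mult tendsto_const LIMSEQ_inverse_real_of_nat)
  then show ?thesis by (simp add: divide_inverse add.commute)
qed

lemma representer_exists:
  assumes sg: "simple_graph E" and fin: "\<And>x. finite (nbr E x)"
    and conn: "\<And>a b. E\<^sup>*\<^sup>* a b"
  shows "\<exists>w. finite_energy E w \<and> (\<forall>f. finite_energy E f \<longrightarrow> ip E f w = f a - f b)"
proof (cases "a = b")
  case True
  show ?thesis
    by (rule exI[of _ "\<lambda>x. 0"]) (auto simp: True fe_const ip_sym[of E _ "\<lambda>x. 0"] ip_const_left)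
next
  case ab: False
  define A where "A = {f. finite_energy E f \<and> f a - f b = 1}"
  define m where "m = (INF f\<in>A. ip E f f)"
  have indA: "ind a \<in> A" using ab fe_ind[OF sg fin] by (simp add: A_def ind_def)
  have bdd: "bdd_below ((\<lambda>f. ip E f f) ` A)" by (rule bdd_belowI[of _ 0]) (auto intro: ip_nonneg)
  have m_le: "\<And>f. f \<in> A \<Longrightarrow> m \<le> ip E f f" unfolding m_def by (rule cINF_lower[OF bdd])
  have m_nonneg: "0 \<le> m" unfolding m_def using indA by (intro cINF_greatest) (auto intro: ip_nonneg)
  have "\<forall>n::nat. \<exists>f. f \<in> A \<and> ip E f f < m + 1/(real n + 1)"
  proof
    fix n :: nat
    have "Inf ((\<lambda>f. ip E f f) ` A) < m + 1/(real n + 1)" unfolding m_def by simp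
    then obtain y where "y \<in> (\<lambda>f. ip E f f) ` A" "y < m + 1/(real n + 1)"
      using cInf_lessD[of "(\<lambda>f. ip E f f) ` A"] indA by blast
    then show "\<exists>f. f \<in> A \<and> ip E f f < m + 1/(real n + 1)" by blast
  qed
  then obtain F where F: "\<And>n. F n \<in> A" "\<And>n. ip E (F n) (F n) < m + 1/(real n + 1)" by metis
  define g where "g n = (\<lambda>x. F n x - F n b)" for n
  have gA: "g n \<in> A" for n using F(1)[of n] fe_diff[OF _ fe_const] by (auto simp: A_def g_def)
  have gfe: "finite_energy E (g n)" for n using gA by (simp add: A_def)
  have gb: "g n b = 0" for n by (simp add: g_def)
  have ga: "g n a = 1" for n using gA[of n] gb[of n] by (simp add: A_def)
  have gE: "ip E (g n) (g n) < m + 1/(real n + 1)" for n using F(2)[of n] by (simp add: g_def ip_shift)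
  have dE: "ip E (\<lambda>x. g n x - g k x) (\<lambda>x. g n x - g k x) \<le> 2 * (1/(real n+1)) + 2 * (1/(real k+1))" for n k
  proof -
    have s: "finite_energy E (\<lambda>x. g n x + g k x)" by (rule fe_add[OF gfe gfe])
    have hA: "(\<lambda>x. (1/2) * (g n x + g k x)) \<in> A"
      using fe_scale[OF s, of "1/2"] ga[of n] ga[of k] gb[of n] gb[of k] by (simp add: A_def)
    have "m \<le> ip E (\<lambda>x. (1/2) * (g n x + g k x)) (\<lambda>x. (1/2) * (g n x + g k x))" by (rule m_le[OF hA])
    also have "\<dots> = (1/4) * ip E (\<lambda>x. g n x + g k x) (\<lambda>x. g n x + g k x)"
      unfolding ip_scale_both by (simp add: power2_eq_square)
    finally have "4 * m \<le> ip E (\<lambda>x. g n x + g k x) (\<lambda>x. g n x + g k x)" by simp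
    moreover note parallelogram[OF gfe[of n] gfe[of k]]
    moreover note gE[of n] gE[of k]
    ultimately show ?thesis by linarith
  qed
  have conv: "convergent (\<lambda>n. g n x)" for x
  proof -
    obtain C where C: "\<And>f. finite_energy E f \<Longrightarrow> (f x - f b)^2 \<le> C * ip E f f"
      using path_bound[OF sg conn[of x b]] by blast
    show ?thesis
    proof (rule cauchy_from_bound[of _ "2 * \<bar>C\<bar>"])
      fix n k
      have "(g n x - g k x)^2 = ((\<lambda>y. g n y - g k y) x - (\<lambda>y. g n y - g k y) b)^2" by (simp add: gb)
      also have "\<dots> \<le> C * ip E (\<lambda>x. g n x - g k x) (\<lambda>x. g n x - g k x)" by (rule C[OF fe_diff[OF gfe gfe]])
      also have "\<dots> \<le> \<bar>C\<bar> * ip E (\<lambda>x. g n x - g k x) (\<lambda>x. g n x - g k x)"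
        by (rule mult_right_mono) (auto intro: ip_nonneg)
      also have "\<dots> \<le> \<bar>C\<bar> * (2 * (1/(real n+1)) + 2 * (1/(real k+1)))"
        by (rule mult_left_mono[OF dE]) simp
      finally show "(g n x - g k x)^2 \<le> 2 * \<bar>C\<bar> * (1/(real n+1) + 1/(real k+1))" by (simp add: algebra_simps)
    qed
  qed
  define u where "u x = lim (\<lambda>n. g n x)" for x
  have gu: "(\<lambda>n. g n x) \<longlonglongrightarrow> u x" for x using conv[of x] by (simp add: u_def convergent_LIMSEQ_iff)
  have ud: "finite_energy E (\<lambda>x. u x - g n x) \<and> ip E (\<lambda>x. u x - g n x) (\<lambda>x. u x - g n x) \<le> 2 / (real n + 1)" for n
  proof -
    have fs: "sum (\<lambda>p. (dd (\<lambda>x. u x - g n x) p)^2) S \<le> 4 / (real n + 1)" if S: "finite S" "S \<subseteq> Dg E" for S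
    proof -
      have lim1: "(\<lambda>k. sum (\<lambda>p. (dd (\<lambda>x. g k x - g n x) p)^2) S) \<longlonglongrightarrow> sum (\<lambda>p. (dd (\<lambda>x. u x - g n x) p)^2) S"
        unfolding dd_def by (intro tendsto_intros gu)
      have lim2: "(\<lambda>k. 4 / (real n + 1) + 4 / (real k + 1)) \<longlonglongrightarrow> 4 / (real n + 1) + 0"
        by (intro tendsto_intros inv_tendsto)
      have le: "sum (\<lambda>p. (dd (\<lambda>x. g k x - g n x) p)^2) S \<le> 4 / (real n + 1) + 4 / (real k + 1)" for k
      proof -
        have "sum (\<lambda>p. (dd (\<lambda>x. g k x - g n x) p)^2) S \<le> infsum (\<lambda>p. (dd (\<lambda>x. g k x - g n x) p)^2) (Dg E)"
          by (rule finite_sum_le_infsum) (use S fe_diff[OF gfe gfe] in \<open>auto simp: fe_iff\<close>)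
        also have "\<dots> = 2 * ip E (\<lambda>x. g k x - g n x) (\<lambda>x. g k x - g n x)"
          unfolding ip_def by (simp add: power2_eq_square)
        also have "\<dots> \<le> 2 * (2 * (1/(real k+1)) + 2 * (1/(real n+1)))" using dE[of k n] by simp
        finally show ?thesis by simp
      qed
      have "sum (\<lambda>p. (dd (\<lambda>x. u x - g n x) p)^2) S \<le> 4 / (real n + 1) + 0"
        by (rule tendsto_le[OF trivial_limit_sequentially lim2 lim1]) (rule always_eventually, use le in simp)
      then show ?thesis by simp
    qed
    have sm: "(\<lambda>p. (dd (\<lambda>x. u x - g n x) p)^2) summable_on Dg E"
      by (rule nonneg_bdd_above_summable_on) (use fs in \<open>auto intro!: bdd_aboveI2\<close>)
    have "infsum (\<lambda>p. (dd (\<lambda>x. u x - g n x) p)^2) (Dg E) \<le> 4 / (real n + 1)"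
      by (rule infsum_le_finite_sums[OF sm fs]) auto
    then show ?thesis using sm unfolding fe_iff ip_def by (simp add: power2_eq_square)
  qed
  have ufe: "finite_energy E u"
  proof -
    have "finite_energy E (\<lambda>x. (u x - g 0 x) + g 0 x)" by (rule fe_add[OF conjunct1[OF ud] gfe])
    then show ?thesis by simp
  qed
  have ub: "u b = 0" using gu[of b] by (simp add: gb LIMSEQ_const_iff)
  have ua: "u a = 1" using gu[of a] by (simp add: ga LIMSEQ_const_iff)
  have uA: "u \<in> A" using ufe ua ub by (simp add: A_def)
  have uE_le: "ip E u u \<le> m"
  proof -
    have le: "ip E u u \<le> (sqrt (m + 1/(real n+1)) + sqrt (2/(real n+1)))^2" for n
    proof -
      have "ip E u u = ip E (\<lambda>x. g n x + (u x - g n x)) (\<lambda>x. g n x + (u x - g n x))" by simp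
      also have "\<dots> \<le> (sqrt (ip E (g n) (g n)) + sqrt (ip E (\<lambda>x. u x - g n x) (\<lambda>x. u x - g n x)))^2"
        by (rule minkowski[OF gfe conjunct1[OF ud]])
      also have "\<dots> \<le> (sqrt (m + 1/(real n+1)) + sqrt (2/(real n+1)))^2"
        using gE[of n] conjunct2[OF ud[of n]]
        using ip_nonneg[of E "g n"] ip_nonneg[of E "\<lambda>x. u x - g n x"]
        by (intro power_mono add_mono real_sqrt_le_mono) auto
      finally show ?thesis .
    qed
    have lim: "(\<lambda>n. (sqrt (m + 1/(real n+1)) + sqrt (2/(real n+1)))^2) \<longlonglongrightarrow> (sqrt (m + 0) + sqrt 0)^2"
      by (intro tendsto_intros inv_tendsto)
    have "ip E u u \<le> (sqrt (m + 0) + sqrt 0)^2"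
      by (rule tendsto_le[OF trivial_limit_sequentially lim tendsto_const]) (rule always_eventually, use le in simp)
    then show ?thesis using m_nonneg by simp
  qed
  have uE: "ip E u u = m" using uE_le m_le[OF uA] by simp
  have orth: "ip E u h = 0" if hfe: "finite_energy E h" and hab: "h a = h b" for h
  proof -
    have "(- ip E u h)^2 \<le> 0 * ip E h h"
    proof (rule quad_nonneg_imp)
      fix t :: real
      have "(\<lambda>x. u x + t * h x) \<in> A" using fe_add[OF ufe fe_scale[OF hfe]] ua ub hab by (simp add: A_def)
      then have "m \<le> ip E (\<lambda>x. u x + t * h x) (\<lambda>x. u x + t * h x)" by (rule m_le)
      also have "\<dots> = m + 2 * t * ip E u h + t^2 * ip E h h" using ip_expand[OF ufe hfe] uE by simp
      finally show "0 \<le> 0 - 2 * t * (- ip E u h) + t^2 * ip E h h" by simp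
    qed (rule ip_nonneg)
    then show ?thesis by simp
  qed
  have mpos: "0 < m"
  proof -
    obtain C where C: "\<And>f. finite_energy E f \<Longrightarrow> (f a - f b)^2 \<le> C * ip E f f"
      using path_bound[OF sg conn[of a b]] by blast
    have "1 \<le> C * m" using C[OF ufe] ua ub uE by simp
    then have "m \<noteq> 0" by auto
    then show ?thesis using m_nonneg by simp
  qed
  show ?thesis
  proof (intro exI conjI allI impI)
    show "finite_energy E (\<lambda>x. (1/m) * u x)" by (rule fe_scale[OF ufe])
    fix f assume ffe: "finite_energy E f"
    have hfe: "finite_energy E (\<lambda>x. f x - (f a - f b) * u x)" by (rule fe_diff[OF ffe fe_scale[OF ufe]])
    have "ip E u (\<lambda>x. f x - (f a - f b) * u x) = 0" by (rule orth[OF hfe]) (simp add: ua ub)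
    moreover have "ip E (\<lambda>x. f x - (f a - f b) * u x) u = ip E f u - (f a - f b) * ip E u u"
      using ip_diff_left[OF ffe fe_scale[OF ufe] ufe] ip_scale_left by simp
    ultimately have "ip E f u = (f a - f b) * m" using ip_sym uE by (metis eq_iff_diff_eq_0)
    then show "ip E f (\<lambda>x. (1/m) * u x) = f a - f b" using mpos unfolding ip_scale_right by simp
  qed
qed


definition rep :: "('a \<Rightarrow> 'a \<Rightarrow> bool) \<Rightarrow> 'a \<Rightarrow> 'a \<Rightarrow> ('a \<Rightarrow> real) \<Rightarrow> bool" where
  "rep E a b w \<longleftrightarrow> finite_energy E w \<and> (\<forall>f. finite_energy E f \<longrightarrow> ip E f w = f a - f b)"

lemma rep_fe: "rep E a b w \<Longrightarrow> finite_energy E w" by (simp add: rep_def)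
lemma rep_ip: "rep E a b w \<Longrightarrow> finite_energy E f \<Longrightarrow> ip E f w = f a - f b" by (simp add: rep_def)
lemma rep_self: "rep E a b w \<Longrightarrow> ip E w w = w a - w b" by (simp add: rep_def)

lemma eff_res_rep:
  assumes r: "rep E a b w"
  shows "eff_res E a b = ip E w w"
proof -
  have wfe: "finite_energy E w" using r by (simp add: rep_def)
  have wn: "0 \<le> ip E w w" by (rule ip_nonneg)
  let ?X = "{(f a - f b)^2 | f. finite_energy E f \<and> energy E f \<le> 1}"
  have "Sup ?X = ip E w w"
  proof (rule cSup_eq_maximum)
    show "ip E w w \<in> ?X"
    proof (cases "ip E w w = 0")
      case True
      then show ?thesis by (intro CollectI exI[of _ "\<lambda>x. 0"]) (simp add: fe_const energy_ip ip_const_left)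
    next
      case False
      then have pos: "0 < ip E w w" using wn by simp
      define c where "c = 1 / sqrt (ip E w w)"
      have fe: "finite_energy E (\<lambda>x. c * w x)" by (rule fe_scale[OF wfe])
      have en: "energy E (\<lambda>x. c * w x) = 1"
        unfolding energy_ip ip_scale_both c_def using pos by (simp add: power_divide)
      have "((\<lambda>x. c * w x) a - (\<lambda>x. c * w x) b)^2 = c^2 * (w a - w b)^2" by (simp add: algebra_simps power2_eq_square)
      also have "\<dots> = ip E w w" unfolding rep_self[OF r, symmetric] c_def using pos
        by (simp add: power_divide power2_eq_square)
      finally show ?thesis using fe en by (intro CollectI exI[of _ "\<lambda>x. c * w x"]) simp
    qed
  next
    fix z assume "z \<in> ?X"
    then obtain f where f: "z = (f a - f b)^2" "finite_energy E f" "energy E f \<le> 1" by blast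
    have "z = (ip E f w)^2" using f rep_ip[OF r f(2)] by simp
    also have "\<dots> \<le> ip E f f * ip E w w" by (rule cauchy_schwarz[OF f(2) wfe])
    also have "\<dots> \<le> 1 * ip E w w" using f(3) wn by (intro mult_right_mono) (simp_all add: energy_ip)
    finally show "z \<le> ip E w w" by simp
  qed
  then show ?thesis unfolding eff_res_def .
qed

lemma rep_neg: "rep E a b w \<Longrightarrow> rep E b a (\<lambda>x. - w x)"
  unfolding rep_def using fe_uminus ip_scale_right[of E _ "-1" w] by auto

lemma rep_add:
  assumes r1: "rep E a b w1" and r2: "rep E b c w2"
  shows "rep E a c (\<lambda>x. w1 x + w2 x)"
  unfolding rep_def
proof (intro conjI allI impI)
  show "finite_energy E (\<lambda>x. w1 x + w2 x)" by (rule fe_add[OF rep_fe[OF r1] rep_fe[OF r2]])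
  fix f assume f: "finite_energy E f"
  have "ip E f (\<lambda>x. w1 x + w2 x) = ip E f w1 + ip E f w2" by (rule ip_add_right[OF rep_fe[OF r1] rep_fe[OF r2] f])
  also have "\<dots> = f a - f c" using rep_ip[OF r1 f] rep_ip[OF r2 f] by simp
  finally show "ip E f (\<lambda>x. w1 x + w2 x) = f a - f c" .
qed

lemma rep_zero: "rep E a a (\<lambda>x. 0)"
  unfolding rep_def by (simp add: fe_const ip_sym[of E _ "\<lambda>x. 0"] ip_const_left)

locale G =
  fixes E :: "'a \<Rightarrow> 'a \<Rightarrow> bool"
  assumes sg: "simple_graph E" and fin: "\<And>x. finite (nbr E x)" and conn: "\<And>a b. E\<^sup>*\<^sup>* a b"
begin

lemma rep_ex: "\<exists>w. rep E a b w"
  using representer_exists[OF sg fin conn] unfolding rep_def by blast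

definition W where "W a b = (SOME w. rep E a b w)"

lemma W: "rep E a b (W a b)"
  unfolding W_def using rep_ex by (rule someI_ex)

lemma res_W: "eff_res E a b = ip E (W a b) (W a b)" by (rule eff_res_rep[OF W])

lemma res_nonneg: "0 \<le> eff_res E a b" unfolding res_W by (rule ip_nonneg)

lemma res_self: "eff_res E a a = 0"
  using eff_res_rep[OF rep_zero, of E a] ip_const_left[of E 0 "\<lambda>x. 0"] by simp

lemma res_sym: "eff_res E a b = eff_res E b a"
proof -
  have "eff_res E b a = ip E (\<lambda>x. - W a b x) (\<lambda>x. - W a b x)" by (rule eff_res_rep[OF rep_neg[OF W]])
  also have "\<dots> = ip E (W a b) (W a b)"
    using ip_scale_both[of E "-1" "W a b"] by simp
  finally show ?thesis unfolding res_W by simp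
qed

lemma max_principle:
  assumes r: "rep E a b w"
  shows "w y \<le> w a"
proof -
  define M where "M = w a"
  define f where "f x = min (w x) M" for x
  have wfe: "finite_energy E w" using r by (simp add: rep_def)
  have lip: "(dd f p)^2 \<le> (dd w p)^2" for p
  proof -
    have "\<bar>dd f p\<bar> \<le> \<bar>dd w p\<bar>" unfolding dd_def f_def by (auto simp: min_def)
    then show ?thesis by (simp add: abs_le_square_iff)
  qed
  have ffe: "finite_energy E f"
    unfolding fe_iff
    by (rule summable_on_comparison_test[of "\<lambda>p. (dd w p)^2"]) (use wfe lip in \<open>auto simp: fe_iff\<close>)
  have fle: "ip E f f \<le> ip E w w"
    unfolding ip_def using ffe wfe lip
    by (intro mult_left_mono infsum_mono) (auto simp: fe_iff power2_eq_square)
  have wb: "w b \<le> w a" using rep_self[OF r] ip_nonneg[of E w] by simp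
  have fa: "f a = w a" and fb: "f b = w b" using wb by (auto simp: f_def M_def)
  have fw: "ip E f w = ip E w w" using rep_ip[OF r ffe] rep_self[OF r] fa fb by simp
  have "ip E (\<lambda>x. f x + (-1) * w x) (\<lambda>x. f x + (-1) * w x) = ip E f f + 2 * (-1) * ip E f w + (-1)^2 * ip E w w"
    by (rule ip_expand[OF ffe wfe])
  also have "\<dots> \<le> 0" using fle fw by simp
  finally have z: "ip E (\<lambda>x. f x + (-1) * w x) (\<lambda>x. f x + (-1) * w x) = 0"
    using ip_nonneg by (metis order_antisym)
  have "(\<lambda>x. f x + (-1) * w x) y = (\<lambda>x. f x + (-1) * w x) a"
    by (rule zero_energy_const[OF sg fe_add[OF ffe fe_scale[OF wfe]] z conn])
  then have "w y = f y" using fa by simp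
  then show ?thesis unfolding f_def M_def by simp
qed

lemma res_edge_le1:
  assumes e: "E x y" shows "eff_res E x y \<le> 1"
proof -
  have "(W x y x - W x y y)^2 \<le> ip E (W x y) (W x y)" by (rule edge_bound[OF sg rep_fe[OF W] e])
  then have h: "eff_res E x y * eff_res E x y \<le> eff_res E x y * 1"
    using rep_self[OF W, of x y] res_W[of x y] by (simp add: power2_eq_square)
  show ?thesis
  proof (cases "eff_res E x y = 0")
    case False
    then have "0 < eff_res E x y" using res_nonneg[of x y] by simp
    then show ?thesis using h mult_le_cancel_left_pos by blast
  qed simp
qed

lemma key_terms:
  assumes j: "j \<in> nbr E x"
  shows "eff_res E v j = eff_res E j x + 2 * (W x v j - W x v x) + eff_res E x v"
proof -
  have r: "rep E j v (\<lambda>y. W j x y + 1 * W x v y)" using rep_add[OF W W] by simp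
  have "eff_res E j v = ip E (W j x) (W j x) + 2 * 1 * ip E (W j x) (W x v) + 1^2 * ip E (W x v) (W x v)"
    unfolding eff_res_rep[OF r] by (rule ip_expand[OF rep_fe[OF W] rep_fe[OF W]])
  also have "ip E (W j x) (W x v) = W x v j - W x v x"
    using rep_ip[OF W[of j x] rep_fe[OF W[of x v]]] ip_sym[of E "W j x" "W x v"] by simp
  finally show ?thesis using res_sym[of j v] res_W by simp
qed

lemma res_lip:
  assumes e: "E x j" shows "eff_res E v j - eff_res E v x \<le> 1"
proof -
  have j: "j \<in> nbr E x" using e by (simp add: nbr_def)
  have "eff_res E v j = eff_res E j x + 2 * (W x v j - W x v x) + eff_res E x v" by (rule key_terms[OF j])
  moreover have "W x v j \<le> W x v x" by (rule max_principle[OF W])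
  moreover have "eff_res E j x \<le> 1" by (rule res_edge_le1[OF simple_sym[OF sg e]])
  moreover have "eff_res E x v = eff_res E v x" by (rule res_sym)
  ultimately show ?thesis by (simp add: algebra_simps)
qed

lemma key_identity:
  "(\<Sum>j\<in>nbr E x. eff_res E v j)
    = real (card (nbr E x)) * eff_res E v x + (\<Sum>j\<in>nbr E x. eff_res E x j) - 2 + 2 * (if x = v then 1 else 0)"
proof -
  have "(\<Sum>j\<in>nbr E x. eff_res E v j)
     = (\<Sum>j\<in>nbr E x. eff_res E x j + 2 * (W x v j - W x v x) + eff_res E v x)"
  proof (rule sum.cong[OF refl])
    fix j assume "j \<in> nbr E x"
    then show "eff_res E v j = eff_res E x j + 2 * (W x v j - W x v x) + eff_res E v x"
      using key_terms[of j x v] res_sym[of j x] res_sym[of x v] by simp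
  qed
  also have "\<dots> = (\<Sum>j\<in>nbr E x. eff_res E x j) + (\<Sum>j\<in>nbr E x. 2 * (W x v j - W x v x))
       + (\<Sum>j\<in>nbr E x. eff_res E v x)"
    by (simp only: sum.distrib)
  also have "(\<Sum>j\<in>nbr E x. eff_res E v x) = real (card (nbr E x)) * eff_res E v x" by simp
  also have "(\<Sum>j\<in>nbr E x. 2 * (W x v j - W x v x)) = 2 * (\<Sum>j\<in>nbr E x. W x v j - W x v x)"
    by (simp only: sum_distrib_left)
  also have "(\<Sum>j\<in>nbr E x. W x v j - W x v x) = - (\<Sum>j\<in>nbr E x. W x v x - W x v j)"
    by (subst sum_negf[symmetric]) simp
  also have "(\<Sum>j\<in>nbr E x. W x v x - W x v j) = ip E (W x v) (ind x)"
    by (rule ip_ind[OF sg fin, symmetric])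
  also have "ip E (W x v) (ind x) = ind x x - ind x v"
    using rep_ip[OF W[of x v] fe_ind[OF sg fin, of x]] ip_sym[of E "ind x" "W x v"] by simp
  also have "ind x x - ind x v = 1 - (if x = v then 1 else 0)" by (auto simp: ind_def)
  finally show ?thesis by (simp add: algebra_simps)
qed

end


lemma auto_bij_Dg:
  assumes a: "graph_automorphism E \<sigma>"
  shows "bij_betw (\<lambda>p. (\<sigma> (fst p), \<sigma> (snd p))) (Dg E) (Dg E)"
proof -
  have b: "bij \<sigma>" and e: "\<And>u v. E u v \<longleftrightarrow> E (\<sigma> u) (\<sigma> v)" using a by (auto simp: graph_automorphism_def)
  have su: "\<And>u. \<sigma> (inv \<sigma> u) = u" by (rule surj_f_inv_f[OF bij_is_surj[OF b]])
  have us: "\<And>u. inv \<sigma> (\<sigma> u) = u" by (rule inv_f_f[OF bij_is_inj[OF b]])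
  have e2: "\<And>u v. E u v \<longleftrightarrow> E (inv \<sigma> u) (inv \<sigma> v)"
  proof -
    fix u v have "E (inv \<sigma> u) (inv \<sigma> v) \<longleftrightarrow> E (\<sigma> (inv \<sigma> u)) (\<sigma> (inv \<sigma> v))" by (rule e)
    then show "E u v \<longleftrightarrow> E (inv \<sigma> u) (inv \<sigma> v)" unfolding su by simp
  qed
  show ?thesis
  proof (rule bij_betwI[where g="\<lambda>p. (inv \<sigma> (fst p), inv \<sigma> (snd p))"])
    show "(\<lambda>p. (\<sigma> (fst p), \<sigma> (snd p))) \<in> Dg E \<rightarrow> Dg E"
    proof
      fix p assume "p \<in> Dg E" then show "(\<sigma> (fst p), \<sigma> (snd p)) \<in> Dg E"
        using e[of "fst p" "snd p"] by (simp add: Dg_def)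
    qed
    show "(\<lambda>p. (inv \<sigma> (fst p), inv \<sigma> (snd p))) \<in> Dg E \<rightarrow> Dg E"
    proof
      fix p assume "p \<in> Dg E" then show "(inv \<sigma> (fst p), inv \<sigma> (snd p)) \<in> Dg E"
        using e2[of "fst p" "snd p"] by (simp add: Dg_def)
    qed
    fix p show "(inv \<sigma> (fst (\<sigma> (fst p), \<sigma> (snd p))), inv \<sigma> (snd (\<sigma> (fst p), \<sigma> (snd p)))) = p"
      by (simp add: us)
  next
    fix p show "(\<sigma> (fst (inv \<sigma> (fst p), inv \<sigma> (snd p))), \<sigma> (snd (inv \<sigma> (fst p), inv \<sigma> (snd p)))) = p"
      by (simp add: su)
  qed
qed

lemma dd_comp: "dd (\<lambda>x. f (\<sigma> x)) p = dd f (\<sigma> (fst p), \<sigma> (snd p))"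
  by (simp add: dd_def)

lemma auto_fe:
  assumes a: "graph_automorphism E \<sigma>" and f: "finite_energy E f"
  shows "finite_energy E (\<lambda>x. f (\<sigma> x))"
  using f unfolding fe_iff dd_comp
  using summable_on_reindex_bij_betw[OF auto_bij_Dg[OF a], of "\<lambda>p. (dd f p)^2"] by simp

lemma auto_ip:
  assumes a: "graph_automorphism E \<sigma>"
  shows "ip E (\<lambda>x. f (\<sigma> x)) (\<lambda>x. g (\<sigma> x)) = ip E f g"
  unfolding ip_def dd_comp
  using infsum_reindex_bij_betw[OF auto_bij_Dg[OF a], of "\<lambda>p. dd f p * dd g p"] by simp

lemma auto_inv:
  assumes a: "graph_automorphism E \<sigma>"
  shows "graph_automorphism E (inv \<sigma>)"
proof -
  have b: "bij \<sigma>" and e: "\<And>u v. E u v \<longleftrightarrow> E (\<sigma> u) (\<sigma> v)" using a by (auto simp: graph_automorphism_def)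
  have su: "\<And>u. \<sigma> (inv \<sigma> u) = u" by (rule surj_f_inv_f[OF bij_is_surj[OF b]])
  show ?thesis unfolding graph_automorphism_def
    using bij_imp_bij_inv[OF b] e su by metis
qed

context G
begin

lemma res_auto:
  assumes a: "graph_automorphism E \<sigma>"
  shows "eff_res E (\<sigma> x) (\<sigma> y) = eff_res E x y"
proof -
  have b: "bij \<sigma>" using a by (simp add: graph_automorphism_def)
  have us: "\<And>u. inv \<sigma> (\<sigma> u) = u" by (rule inv_f_f[OF bij_is_inj[OF b]])
  let ?w = "W (\<sigma> x) (\<sigma> y)"
  have r: "rep E x y (\<lambda>u. ?w (\<sigma> u))"
    unfolding rep_def
  proof (intro conjI allI impI)
    show "finite_energy E (\<lambda>u. ?w (\<sigma> u))" by (rule auto_fe[OF a rep_fe[OF W]])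
    fix f assume f: "finite_energy E f"
    have f': "finite_energy E (\<lambda>u. f (inv \<sigma> u))" by (rule auto_fe[OF auto_inv[OF a] f])
    have "ip E f (\<lambda>u. ?w (\<sigma> u)) = ip E (\<lambda>u. (\<lambda>z. f (inv \<sigma> z)) (\<sigma> u)) (\<lambda>u. ?w (\<sigma> u))"
      by (simp add: us)
    also have "\<dots> = ip E (\<lambda>z. f (inv \<sigma> z)) ?w" by (rule auto_ip[OF a])
    also have "\<dots> = f x - f y" using rep_ip[OF W f'] by (simp add: us)
    finally show "ip E f (\<lambda>u. ?w (\<sigma> u)) = f x - f y" .
  qed
  have "eff_res E x y = ip E (\<lambda>u. ?w (\<sigma> u)) (\<lambda>u. ?w (\<sigma> u))" by (rule eff_res_rep[OF r])
  also have "\<dots> = ip E ?w ?w" by (rule auto_ip[OF a])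
  also have "\<dots> = eff_res E (\<sigma> x) (\<sigma> y)" by (rule res_W[symmetric])
  finally show ?thesis by simp
qed

definition Sd where "Sd x = (\<Sum>j\<in>nbr E x. eff_res E x j)"

lemma Sd_auto:
  assumes a: "graph_automorphism E \<sigma>"
  shows "Sd (\<sigma> x) = Sd x"
proof -
  have b: "bij \<sigma>" and e: "\<And>u v. E u v \<longleftrightarrow> E (\<sigma> u) (\<sigma> v)" using a by (auto simp: graph_automorphism_def)
  have su: "\<And>u. \<sigma> (inv \<sigma> u) = u" by (rule surj_f_inv_f[OF bij_is_surj[OF b]])
  have bb: "bij_betw \<sigma> (nbr E x) (nbr E (\<sigma> x))"
    unfolding bij_betw_def
  proof
    show "inj_on \<sigma> (nbr E x)" using b bij_is_inj inj_on_subset by blast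
    show "\<sigma> ` nbr E x = nbr E (\<sigma> x)"
    proof
      show "\<sigma> ` nbr E x \<subseteq> nbr E (\<sigma> x)" using e by (auto simp: nbr_def)
      show "nbr E (\<sigma> x) \<subseteq> \<sigma> ` nbr E x"
      proof
        fix j assume "j \<in> nbr E (\<sigma> x)"
        then have "E x (inv \<sigma> j)" using e[of x "inv \<sigma> j"] su by (simp add: nbr_def)
        then show "j \<in> \<sigma> ` nbr E x" using su by (auto simp: nbr_def image_iff intro!: bexI[of _ "inv \<sigma> j"])
      qed
    qed
  qed
  have "Sd (\<sigma> x) = (\<Sum>j\<in>nbr E x. eff_res E (\<sigma> x) (\<sigma> j))"
    unfolding Sd_def by (rule sum.reindex_bij_betw[OF bb, symmetric])
  also have "\<dots> = Sd x" unfolding Sd_def using res_auto[OF a] by simp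
  finally show ?thesis .
qed

lemma Sd_const:
  assumes "vertex_transitive E" shows "Sd x = Sd y"
proof -
  obtain \<sigma> where "graph_automorphism E \<sigma>" "\<sigma> y = x" using assms by (auto simp: vertex_transitive_def)
  then show ?thesis using Sd_auto by metis
qed

lemma internal_sum_zero:
  assumes V: "finite V"
  shows "(\<Sum>x\<in>V. \<Sum>j\<in>nbr E x \<inter> V. h j - h x) = (0::real)"
proof -
  have fin2: "\<forall>x\<in>V. finite (nbr E x \<inter> V)" using fin by simp
  let ?P = "SIGMA x:V. nbr E x \<inter> V"
  have mem: "(snd p, fst p) \<in> ?P" if "p \<in> ?P" for p
  proof -
    obtain x j where p: "p = (x, j)" by (cases p)
    have "x \<in> V" "j \<in> V" "E x j" using that p by (auto simp: nbr_def)
    then show ?thesis using simple_sym[OF sg \<open>E x j\<close>] p by (simp add: nbr_def)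
  qed
  have sw: "bij_betw (\<lambda>p. (snd p, fst p)) ?P ?P"
  proof (rule bij_betwI[where g="\<lambda>p. (snd p, fst p)"])
    show "(\<lambda>p. (snd p, fst p)) \<in> ?P \<rightarrow> ?P" using mem by blast
    show "(\<lambda>p. (snd p, fst p)) \<in> ?P \<rightarrow> ?P" using mem by blast
  qed auto
  have "(\<Sum>x\<in>V. \<Sum>j\<in>nbr E x \<inter> V. h j - h x) = (\<Sum>p\<in>?P. h (snd p) - h (fst p))"
    by (subst sum.Sigma[OF V fin2]) (simp add: case_prod_unfold)
  also have "\<dots> = (\<Sum>p\<in>?P. h (snd p)) - (\<Sum>p\<in>?P. h (fst p))" by (simp add: sum_subtractf)
  also have "(\<Sum>p\<in>?P. h (snd p)) = (\<Sum>p\<in>?P. h (fst p))"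
    using sum.reindex_bij_betw[OF sw, of "\<lambda>p. h (snd p)"] by simp
  finally show ?thesis by simp
qed

lemma flux_bound:
  assumes V: "finite V" and reg: "\<And>x. card (nbr E x) \<le> k"
    and lip: "\<And>x j. E x j \<Longrightarrow> h j - h x \<le> (1::real)"
  shows "\<bar>\<Sum>x\<in>V. \<Sum>j\<in>nbr E x. h j - h x\<bar> \<le> real k * real (card (boundary E V))"
proof -
  have split: "(\<Sum>j\<in>nbr E x. h j - h x) = (\<Sum>j\<in>nbr E x \<inter> V. h j - h x) + (\<Sum>j\<in>nbr E x - V. h j - h x)" for x
  proof -
    have e: "nbr E x = (nbr E x \<inter> V) \<union> (nbr E x - V)" by blast
    show ?thesis
      by (subst e, rule sum.union_disjoint) (use fin[of x] in auto)
  qed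
  have tot: "(\<Sum>x\<in>V. \<Sum>j\<in>nbr E x. h j - h x) = (\<Sum>x\<in>V. \<Sum>j\<in>nbr E x - V. h j - h x)"
    using internal_sum_zero[OF V, of h] by (simp add: split sum.distrib)
  have each: "\<bar>\<Sum>j\<in>nbr E x - V. h j - h x\<bar> \<le> (if x \<in> boundary E V then real k else 0)" if x: "x \<in> V" for x
  proof (cases "x \<in> boundary E V")
    case True
    have "\<bar>\<Sum>j\<in>nbr E x - V. h j - h x\<bar> \<le> (\<Sum>j\<in>nbr E x - V. \<bar>h j - h x\<bar>)" by (rule sum_abs)
    also have "\<dots> \<le> (\<Sum>j\<in>nbr E x - V. 1)"
    proof (rule sum_mono)
      fix j assume "j \<in> nbr E x - V"
      then have "E x j" "E j x" using simple_sym[OF sg] by (auto simp: nbr_def)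
      then show "\<bar>h j - h x\<bar> \<le> 1" using lip[of x j] lip[of j x] by auto
    qed
    also have "\<dots> = real (card (nbr E x - V))" by simp
    also have "\<dots> \<le> real (card (nbr E x))" using fin[of x] by (simp add: card_mono)
    also have "\<dots> \<le> real k" using reg[of x] by simp
    finally show ?thesis using True by simp
  next
    case False
    then have ee: "nbr E x - V = {}" using x by (auto simp: boundary_def nbr_def)
    show ?thesis unfolding ee using False by simp
  qed
  have "\<bar>\<Sum>x\<in>V. \<Sum>j\<in>nbr E x - V. h j - h x\<bar> \<le> (\<Sum>x\<in>V. \<bar>\<Sum>j\<in>nbr E x - V. h j - h x\<bar>)" by (rule sum_abs)
  also have "\<dots> \<le> (\<Sum>x\<in>V. if x \<in> boundary E V then real k else 0)" by (rule sum_mono[OF each])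
  also have "\<dots> = (\<Sum>x\<in>boundary E V. if x \<in> boundary E V then real k else 0)"
    by (rule sum.mono_neutral_right[OF V]) (auto simp: boundary_def)
  also have "\<dots> = (\<Sum>x\<in>boundary E V. real k)" by (rule sum.cong) auto
  also have "\<dots> = real k * real (card (boundary E V))" by simp
  finally show ?thesis using tot by simp
qed

end


lemma walks_0: "walks E v 0 = {[v]}"
proof
  show "walks E v 0 \<subseteq> {[v]}"
  proof
    fix ws assume "ws \<in> walks E v 0"
    then have "length ws = 1" "ws ! 0 = v" by (auto simp: walks_def)
    then show "ws \<in> {[v]}" by (cases ws) auto
  qed
  show "{[v]} \<subseteq> walks E v 0" by (auto simp: walks_def)
qed

lemma walk_last:
  assumes "ws \<in> walks E v r" shows "last ws = ws ! r"
proof -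
  have l: "length ws = Suc r" using assms by (simp add: walks_def)
  then have "ws \<noteq> []" by auto
  then show ?thesis using l by (simp add: last_conv_nth)
qed

lemma walks_Suc:
  "walks E v (Suc r) = (\<lambda>p. fst p @ [snd p]) ` (SIGMA ws:walks E v r. nbr E (last ws))"
proof
  show "(\<lambda>p. fst p @ [snd p]) ` (SIGMA ws:walks E v r. nbr E (last ws)) \<subseteq> walks E v (Suc r)"
  proof
    fix x assume "x \<in> (\<lambda>p. fst p @ [snd p]) ` (SIGMA ws:walks E v r. nbr E (last ws))"
    then obtain ws j where x: "x = ws @ [j]" and ws: "ws \<in> walks E v r" and j: "E (last ws) j"
      by (auto simp: nbr_def)
    have len: "length ws = Suc r" and w0: "ws ! 0 = v" and ed: "\<And>i. i < r \<Longrightarrow> E (ws ! i) (ws ! Suc i)"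
      using ws by (auto simp: walks_def)
    have lst: "last ws = ws ! r" using walk_last[OF ws] .
    show "x \<in> walks E v (Suc r)"
      unfolding walks_def
    proof (intro CollectI conjI allI impI)
      show "length x = Suc (Suc r)" using x len by simp
      show "x ! 0 = v" using x len w0 by (simp add: nth_append)
      fix i assume i: "i < Suc r"
      show "E (x ! i) (x ! Suc i)"
      proof (cases "i < r")
        case True
        then show ?thesis using x len ed[OF True] by (simp add: nth_append)
      next
        case False
        then have "i = r" using i by simp
        then show ?thesis using x len j lst by (simp add: nth_append)
      qed
    qed
  qed
  show "walks E v (Suc r) \<subseteq> (\<lambda>p. fst p @ [snd p]) ` (SIGMA ws:walks E v r. nbr E (last ws))"
  proof
    fix x assume x: "x \<in> walks E v (Suc r)"
    have len: "length x = Suc (Suc r)" and x0: "x ! 0 = v" and ed: "\<And>i. i < Suc r \<Longrightarrow> E (x ! i) (x ! Suc i)"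
      using x by (auto simp: walks_def)
    have ne: "x \<noteq> []" using len by auto
    have xe: "x = butlast x @ [last x]" using ne by simp
    have bw: "butlast x \<in> walks E v r"
      unfolding walks_def
    proof (intro CollectI conjI allI impI)
      show "length (butlast x) = Suc r" using len by simp
      show "butlast x ! 0 = v" using len x0 by (simp add: nth_butlast)
      fix i assume i: "i < r"
      show "E (butlast x ! i) (butlast x ! Suc i)" using ed[of i] i len by (simp add: nth_butlast)
    qed
    have "last (butlast x) = x ! r" using walk_last[OF bw] len by (simp add: nth_butlast)
    moreover have "last x = x ! Suc r" using ne len by (simp add: last_conv_nth)
    ultimately have "E (last (butlast x)) (last x)" using ed[of r] by simp
    then show "x \<in> (\<lambda>p. fst p @ [snd p]) ` (SIGMA ws:walks E v r. nbr E (last ws))"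
      using bw xe by (auto simp: nbr_def image_iff intro!: bexI[of _ "(butlast x, last x)"])
  qed
qed

lemma walks_inj: "inj_on (\<lambda>p. fst p @ [snd p]) A"
  by (auto simp: inj_on_def prod_eq_iff)

lemma finite_walks:
  assumes fin: "\<And>x. finite (nbr E x)"
  shows "finite (walks E v r)"
proof (induction r)
  case 0 then show ?case by (simp add: walks_0)
next
  case (Suc r)
  then show ?case unfolding walks_Suc using fin by (intro finite_imageI finite_SigmaI) auto
qed

context G
begin

definition Wsum where "Wsum v r = (\<Sum>ws\<in>walks E v r. eff_res E v (last ws))"

lemma Wsum_0: "Wsum v 0 = 0" by (simp add: Wsum_def walks_0 res_self)

lemma Wsum_Suc:
  assumes reg: "\<And>x. card (nbr E x) = k" and S2: "\<And>x. Sd x = 2"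
  shows "Wsum v (Suc r) = real k * Wsum v r + 2 * real (closed_walks_count E v r)"
proof -
  let ?A = "walks E v r"
  have fA: "finite ?A" by (rule finite_walks[OF fin])
  have "Wsum v (Suc r) = (\<Sum>p\<in>(SIGMA ws:?A. nbr E (last ws)). eff_res E v (last (fst p @ [snd p])))"
    unfolding Wsum_def walks_Suc by (rule sum.reindex[OF walks_inj, unfolded comp_def])
  also have "\<dots> = (\<Sum>p\<in>(SIGMA ws:?A. nbr E (last ws)). eff_res E v (snd p))" by simp
  also have "\<dots> = (\<Sum>ws\<in>?A. \<Sum>j\<in>nbr E (last ws). eff_res E v j)"
    by (subst sum.Sigma[OF fA]) (auto simp: fin case_prod_unfold)
  also have "\<dots> = (\<Sum>ws\<in>?A. real k * eff_res E v (last ws) + 2 * (if last ws = v then 1 else 0))"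
  proof (rule sum.cong[OF refl])
    fix ws assume "ws \<in> ?A"
    show "(\<Sum>j\<in>nbr E (last ws). eff_res E v j) = real k * eff_res E v (last ws) + 2 * (if last ws = v then 1 else 0)"
      using key_identity[of v "last ws"] S2[of "last ws"] reg[of "last ws"] unfolding Sd_def by simp
  qed
  also have "\<dots> = real k * Wsum v r + 2 * (\<Sum>ws\<in>?A. if last ws = v then 1 else 0)"
    unfolding Wsum_def by (simp add: sum.distrib sum_distrib_left)
  also have "(\<Sum>ws\<in>?A. if last ws = v then 1 else (0::real)) = real (closed_walks_count E v r)"
    unfolding closed_walks_count_def using sum.inter_filter[OF fA, of "\<lambda>_. (1::real)" "\<lambda>ws. last ws = v"]
    by simp
  finally show ?thesis .
qed

lemma Wsum_closed:
  assumes reg: "\<And>x. card (nbr E x) = k" and S2: "\<And>x. Sd x = 2" and k: "0 < k"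
  shows "real k * Wsum v r = 2 * real k ^ r * (\<Sum>s<r. real (closed_walks_count E v s) / real k ^ s)"
proof (induction r)
  case 0 then show ?case by (simp add: Wsum_0)
next
  case (Suc r)
  have kp: "(0::real) < real k" using k by simp
  have "real k * Wsum v (Suc r) = real k * (real k * Wsum v r) + 2 * real k * real (closed_walks_count E v r)"
    using Wsum_Suc[OF reg S2] by (simp add: algebra_simps)
  also have "\<dots> = real k * (2 * real k ^ r * (\<Sum>s<r. real (closed_walks_count E v s) / real k ^ s))
      + 2 * real k * real (closed_walks_count E v r)" using Suc by simp
  also have "\<dots> = 2 * real k ^ Suc r * ((\<Sum>s<r. real (closed_walks_count E v s) / real k ^ s)
      + real (closed_walks_count E v r) / real k ^ r)"
    using kp by (simp add: field_simps)
  also have "\<dots> = 2 * real k ^ Suc r * (\<Sum>s<Suc r. real (closed_walks_count E v s) / real k ^ s)" by simp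
  finally show ?case .
qed

end


context G
begin

lemma foster:
  assumes vt: "vertex_transitive E" and reg: "\<And>x. card (nbr E x) = k"
    and inf: "infinite (UNIV :: 'a set)" and sm: "smallish E"
  shows "Sd x = 2"
proof -
  obtain Gs :: "nat \<Rightarrow> 'a set" where Gs: "\<And>m. finite (Gs m) \<and> Gs m \<noteq> {}"
    and lim: "(\<lambda>m. real (card (boundary E (Gs m))) / real (card (Gs m))) \<longlonglongrightarrow> 0"
    using sm unfolding smallish_def by blast
  have bound: "\<bar>Sd x - 2\<bar> \<le> real k * (real (card (boundary E (Gs m))) / real (card (Gs m)))" for m
  proof -
    let ?V = "Gs m"
    have V: "finite ?V" "?V \<noteq> {}" using Gs[of m] by auto
    have cp: "0 < real (card ?V)" using V by (simp add: card_gt_0_iff)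
    obtain v' where v': "v' \<notin> ?V" using ex_new_if_finite[OF inf V(1)] by blast
    let ?h = "\<lambda>y. eff_res E v' y"
    have each: "(\<Sum>j\<in>nbr E y. ?h j - ?h y) = Sd x - 2" if y: "y \<in> ?V" for y
    proof -
      have yv: "y \<noteq> v'" using y v' by auto
      have "(\<Sum>j\<in>nbr E y. ?h j - ?h y) = (\<Sum>j\<in>nbr E y. ?h j) - real (card (nbr E y)) * ?h y"
        by (simp add: sum_subtractf)
      also have "\<dots> = Sd y - 2" using key_identity[of v' y] yv unfolding Sd_def by simp
      also have "Sd y = Sd x" by (rule Sd_const[OF vt])
      finally show ?thesis .
    qed
    have tot: "(\<Sum>y\<in>?V. \<Sum>j\<in>nbr E y. ?h j - ?h y) = real (card ?V) * (Sd x - 2)"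
      using each by simp
    have "\<bar>\<Sum>y\<in>?V. \<Sum>j\<in>nbr E y. ?h j - ?h y\<bar> \<le> real k * real (card (boundary E ?V))"
      by (rule flux_bound[OF V(1)]) (use reg res_lip in auto)
    then have "real (card ?V) * \<bar>Sd x - 2\<bar> \<le> real k * real (card (boundary E ?V))"
      unfolding tot using cp by (simp add: abs_mult)
    then show ?thesis using cp by (simp add: field_simps)
  qed
  have lim2: "(\<lambda>m. real k * (real (card (boundary E (Gs m))) / real (card (Gs m)))) \<longlonglongrightarrow> real k * 0"
    by (intro tendsto_mult tendsto_const lim)
  have "\<bar>Sd x - 2\<bar> \<le> real k * 0"
    by (rule tendsto_le[OF trivial_limit_sequentially lim2 tendsto_const]) (use bound in auto)
  then show ?thesis by simp
qed

end

theorem theorem2: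
  fixes E :: "'a \<Rightarrow> 'a \<Rightarrow> bool" and k :: nat and v :: 'a and r :: nat
  assumes "infinite (UNIV :: 'a set)"
    and "simple_graph E"
    and "connected_graph E"
    and "vertex_transitive E"
    and "smallish E"
    and "regular_graph E k"
    and "r > 0"
  shows "(\<Sum>ws\<in>walks E v r. eff_res E v (last ws))
         = 2 * real k ^ (r - 1) * (\<Sum>s<r. real (closed_walks_count E v s) / real k ^ s)"
proof -
  have fin: "\<And>x. finite (nbr E x)" and reg: "\<And>x. card (nbr E x) = k"
    using assms(6) by (auto simp: regular_graph_def nbr_def)
  have conn: "\<And>a b. E\<^sup>*\<^sup>* a b" using assms(3) by (simp add: connected_graph_def)
  interpret G E by unfold_locales (use assms(2) fin conn in auto)
  have S2: "\<And>x. Sd x = 2" by (rule foster[OF assms(4) reg assms(1) assms(5)])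
  have k: "0 < k"
  proof (rule ccontr)
    assume "\<not> 0 < k"
    then have "\<And>x. nbr E x = {}" using reg fin by (metis card_0_eq gr0I)
    then have noe: "\<And>x y. \<not> E x y" by (auto simp: nbr_def)
    have "\<And>a b. E\<^sup>*\<^sup>* a b \<Longrightarrow> a = b"
    proof -
      fix a b assume "E\<^sup>*\<^sup>* a b" then show "a = b" by (induction rule: rtranclp_induct) (auto simp: noe)
    qed
    then have "UNIV = {v}" using conn by blast
    then show False using assms(1) by (metis finite.emptyI finite_insert)
  qed
  have c: "real k * Wsum v r = 2 * real k ^ r * (\<Sum>s<r. real (closed_walks_count E v s) / real k ^ s)"
    by (rule Wsum_closed[OF reg S2 k])
  have kr: "real k ^ r = real k * real k ^ (r - 1)" using assms(7) by (cases r) auto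
  have "real k * Wsum v r = real k * (2 * real k ^ (r - 1) * (\<Sum>s<r. real (closed_walks_count E v s) / real k ^ s))"
    using c kr by (simp add: algebra_simps)
  then have "Wsum v r = 2 * real k ^ (r - 1) * (\<Sum>s<r. real (closed_walks_count E v s) / real k ^ s)"
    using k by simp
  then show ?thesis by (simp add: Wsum_def)
qed

end
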